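(* Let $G$ be a finite group and $\mathcal{P}$ a prime ideal of $\mathrm{Gh}(\underline{A}_G)$ with $\mathcal{P}(G/e)=(0)\subseteq\mathbb{Z}$. For $I\le G$ let $p_I\ge0$ be the integer with $\mathcal{P}(G/G)=\widetilde{A}(G)\cap\prod_{I\le G}p_I\mathbb{Z}$, and set $\mathscr{F}(\mathcal{P})=\{I\le G: p_I\ne1\}$ and $\mathscr{F}_0=\{I\le G:p_I=0\}$. Then $\mathscr{F}(\mathcal{P})=\mathscr{F}_0$ and $\mathcal{P}=\mathcal{P}_{\mathscr{F}(\mathcal{P}),0}$.
   Context: For $H\le G$, $\widetilde{A}(H)$ is the subring of $\prod_{I\le H}\mathbb{Z}$ of tuples $(a_I)_{I\le H}$ with $a_{hIh^{-1}}=a_I$ for $h\in H$ (so $\widetilde{A}(e)=\mathbb{Z}$). $\mathrm{Gh}(\underline{A}_G)$ is the $G$-Tambara functor with $\mathrm{Gh}(\underline{A}_G)(G/H)=\widetilde{A}(H)$ and, for $H\le K$, $g\in G$, $I^g=g^{-1}Ig$: $\mathrm{res}^K_H(b)_L=b_L$; $\mathrm{tr}^K_H(a)_I=\sum_{kH\in K/H,\ I^k\le H}a_{I^k}$; $\mathrm{nm}^K_H(a)_I=\prod_{IgH\in I\backslash K/H}a_{I^g\cap H}$; $c_{g,H}(a)_J=a_{J^g}$ for $J\le gHg^{-1}$. For a set $\mathscr{F}$ of subgroups closed under conjugation and $p$ a prime or $0$, $\mathcal{P}_{\mathscr{F},p}(G/H)=\widetilde{A}(H)\cap\prod_{I\le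 H}\delta(I)\mathbb{Z}$ where $\delta(I)=p$ if $I\in\mathscr{F}$ and $1$ otherwise. A Tambara ideal is a collection of ideals $\mathcal{I}(G/H)$ closed under all restrictions, transfers, norms and conjugations; it is prime (Nakaoka) if it is not everything and whenever $a\in T(G/K_1)$, $b\in T(G/K_2)$ satisfy $\big(\mathrm{nm}^L_{g_1H_1g_1^{-1}}c_{g_1,H_1}\mathrm{res}^{K_1}_{H_1}(a)\big)\big(\mathrm{nm}^L_{g_2H_2g_2^{-1}}c_{g_2,H_2}\mathrm{res}^{K_2}_{H_2}(b)\big)\in\mathcal{I}(G/L)$ for all $L,H_1,H_2\le G$, $g_1,g_2\in G$ with $H_i\le K_i$, $g_iH_ig_i^{-1}\le L$, then $a\in\mathcal{I}(G/K_1)$ or $b\in\mathcal{I}(G/K_2)$. *)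

theory Defs
  imports "HOL-Algebra.Coset"
begin

definition conjset :: "('a, 'b) monoid_scheme \<Rightarrow> 'a \<Rightarrow> 'a set \<Rightarrow> 'a set" where
  "conjset G g I = (\<lambda>x. g \<otimes>\<^bsub>G\<^esub> x \<otimes>\<^bsub>G\<^esub> inv\<^bsub>G\<^esub> g) ` I"

definition upc :: "('a, 'b) monoid_scheme \<Rightarrow> 'a set \<Rightarrow> 'a \<Rightarrow> 'a set" where
  "upc G I g = conjset G (inv\<^bsub>G\<^esub> g) I"

definition isub :: "('a, 'b) monoid_scheme \<Rightarrow> 'a set \<Rightarrow> 'a set \<Rightarrow> bool" where
  "isub G I H \<longleftrightarrow> subgroup I G \<and> I \<subseteq> H"

text \<open>The ring A~(H): H-conjugation invariant integer tuples indexed by subgroups I \<le> H,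
  encoded as functions on subsets that vanish outside the index set.
  Ring operations are pointwise.\<close>
definition Atil :: "('a, 'b) monoid_scheme \<Rightarrow> 'a set \<Rightarrow> ('a set \<Rightarrow> int) set" where
  "Atil G H = {a. (\<forall>I. \<not> isub G I H \<longrightarrow> a I = 0) \<and>
       (\<forall>I h. isub G I H \<and> h \<in> H \<longrightarrow> a (conjset G h I) = a I)}"

definition tideal :: "('a, 'b) monoid_scheme \<Rightarrow> 'a set \<Rightarrow> ('a set \<Rightarrow> int) set \<Rightarrow> bool" where
  "tideal G H J \<longleftrightarrow> J \<subseteq> Atil G H \<and> (\<lambda>I. 0) \<in> J \<and>
     (\<forall>a\<in>J. \<forall>b\<in>J. (\<lambda>I. a I + b I) \<in> J) \<and>
     (\<forall>a\<in>J. (\<lambda>I. - a I) \<in> J) \<and>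
     (\<forall>a\<in>J. \<forall>r\<in>Atil G H. (\<lambda>I. r I * a I) \<in> J)"

definition resG :: "('a, 'b) monoid_scheme \<Rightarrow> 'a set \<Rightarrow> 'a set \<Rightarrow> ('a set \<Rightarrow> int) \<Rightarrow> ('a set \<Rightarrow> int)" where
  "resG G K H b = (\<lambda>L. if isub G L H then b L else 0)"

definition lcosets :: "('a, 'b) monoid_scheme \<Rightarrow> 'a set \<Rightarrow> 'a set \<Rightarrow> 'a set set" where
  "lcosets G K H = {k <#\<^bsub>G\<^esub> H | k. k \<in> K}"

definition trG :: "('a, 'b) monoid_scheme \<Rightarrow> 'a set \<Rightarrow> 'a set \<Rightarrow> ('a set \<Rightarrow> int) \<Rightarrow> ('a set \<Rightarrow> int)" where
  "trG G K H a = (\<lambda>I. if isub G I K then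
      (\<Sum>C\<in>lcosets G K H. let k = (SOME k. k \<in> C) in
          if upc G I k \<subseteq> H then a (upc G I k) else 0)
    else 0)"

definition dcosets :: "('a, 'b) monoid_scheme \<Rightarrow> 'a set \<Rightarrow> 'a set \<Rightarrow> 'a set \<Rightarrow> 'a set set" where
  "dcosets G I K H = {I <#>\<^bsub>G\<^esub> (g <#\<^bsub>G\<^esub> H) | g. g \<in> K}"

definition nmG :: "('a, 'b) monoid_scheme \<Rightarrow> 'a set \<Rightarrow> 'a set \<Rightarrow> ('a set \<Rightarrow> int) \<Rightarrow> ('a set \<Rightarrow> int)" where
  "nmG G K H a = (\<lambda>I. if isub G I K then
      (\<Prod>D\<in>dcosets G I K H. let g = (SOME g. g \<in> D) in a (upc G I g \<inter> H))
    else 0)"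

definition cjG :: "('a, 'b) monoid_scheme \<Rightarrow> 'a \<Rightarrow> 'a set \<Rightarrow> ('a set \<Rightarrow> int) \<Rightarrow> ('a set \<Rightarrow> int)" where
  "cjG G g H a = (\<lambda>J. if isub G J (conjset G g H) then a (upc G J g) else 0)"

text \<open>Tambara ideals of Gh(A_G), indexed by subgroups H (standing for G/H).\<close>
definition tambara_ideal :: "('a, 'b) monoid_scheme \<Rightarrow> ('a set \<Rightarrow> ('a set \<Rightarrow> int) set) \<Rightarrow> bool" where
  "tambara_ideal G P \<longleftrightarrow>
    (\<forall>H. subgroup H G \<longrightarrow> tideal G H (P H)) \<and>
    (\<forall>H K. subgroup H G \<and> subgroup K G \<and> H \<subseteq> K \<longrightarrow>
        (\<forall>b\<in>P K. resG G K H b \<in> P H) \<and>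
        (\<forall>a\<in>P H. trG G K H a \<in> P K) \<and>
        (\<forall>a\<in>P H. nmG G K H a \<in> P K)) \<and>
    (\<forall>g\<in>carrier G. \<forall>H. subgroup H G \<longrightarrow> (\<forall>a\<in>P H. cjG G g H a \<in> P (conjset G g H)))"

definition prime_tideal :: "('a, 'b) monoid_scheme \<Rightarrow> ('a set \<Rightarrow> ('a set \<Rightarrow> int) set) \<Rightarrow> bool" where
  "prime_tideal G P \<longleftrightarrow> tambara_ideal G P \<and>
    (\<exists>H. subgroup H G \<and> P H \<noteq> Atil G H) \<and>
    (\<forall>K1 K2 a b. subgroup K1 G \<longrightarrow> subgroup K2 G \<longrightarrow> a \<in> Atil G K1 \<longrightarrow> b \<in> Atil G K2 \<longrightarrow>
       (\<forall>L H1 H2 g1 g2. subgroup L G \<longrightarrow> subgroup H1 G \<longrightarrow> subgroup H2 G \<longrightarrow>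
          g1 \<in> carrier G \<longrightarrow> g2 \<in> carrier G \<longrightarrow> H1 \<subseteq> K1 \<longrightarrow> H2 \<subseteq> K2 \<longrightarrow>
          conjset G g1 H1 \<subseteq> L \<longrightarrow> conjset G g2 H2 \<subseteq> L \<longrightarrow>
          (\<lambda>I. nmG G L (conjset G g1 H1) (cjG G g1 H1 (resG G K1 H1 a)) I *
               nmG G L (conjset G g2 H2) (cjG G g2 H2 (resG G K2 H2 b)) I) \<in> P L)
       \<longrightarrow> a \<in> P K1 \<or> b \<in> P K2)"

definition Pideal :: "('a, 'b) monoid_scheme \<Rightarrow> 'a set set \<Rightarrow> int \<Rightarrow> 'a set \<Rightarrow> ('a set \<Rightarrow> int) set" where
  "Pideal G F p H = {a \<in> Atil G H. \<forall>I. isub G I H \<longrightarrow> (if I \<in> F then p else 1) dvd a I}"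

definition pI :: "('a, 'b) monoid_scheme \<Rightarrow> ('a set \<Rightarrow> ('a set \<Rightarrow> int) set) \<Rightarrow> 'a set \<Rightarrow> int" where
  "pI G P I = Gcd {a I | a. a \<in> P (carrier G)}"

end

theory Submission
  imports Defs
begin


context group begin

lemma inv_cancel_l [simp]: "x \<in> carrier G \<Longrightarrow> y \<in> carrier G \<Longrightarrow> inv x \<otimes> (x \<otimes> y) = y"
  by (simp add: m_assoc[symmetric])

lemma inv_cancel_r [simp]: "x \<in> carrier G \<Longrightarrow> y \<in> carrier G \<Longrightarrow> x \<otimes> (inv x \<otimes> y) = y"
  by (simp add: m_assoc[symmetric])

lemma conjset_sub: "J \<subseteq> carrier G \<Longrightarrow> g \<in> carrier G \<Longrightarrow> conjset G g J \<subseteq> carrier G"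
  unfolding conjset_def by auto

lemma conjset_subgroup:
  assumes J: "subgroup J G" and g: "g \<in> carrier G"
  shows "subgroup (conjset G g J) G"
proof (rule subgroupI)
  have Jc: "J \<subseteq> carrier G" using J subgroup.subset by blast
  show "conjset G g J \<subseteq> carrier G" using conjset_sub[OF Jc g] .
  show "conjset G g J \<noteq> {}" using subgroup.one_closed[OF J] by (auto simp: conjset_def)
  fix a assume "a \<in> conjset G g J"
  then obtain x where x: "x \<in> J" "a = g \<otimes> x \<otimes> inv g" by (auto simp: conjset_def)
  have xc: "x \<in> carrier G" using x(1) Jc by blast
  have "(g \<otimes> inv x \<otimes> inv g) \<otimes> (g \<otimes> x \<otimes> inv g) = \<one>" using xc g by (simp add: m_assoc)
  then have "inv (g \<otimes> x \<otimes> inv g) = g \<otimes> inv x \<otimes> inv g" using xc g by (intro inv_equality) auto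
  then have e: "inv a = g \<otimes> inv x \<otimes> inv g" using x(2) by simp
  have i: "inv x \<in> J" by (rule subgroup.m_inv_closed[OF J x(1)])
  show "inv a \<in> conjset G g J" unfolding conjset_def using i e by (rule rev_image_eqI)
next
  have Jc: "J \<subseteq> carrier G" using J subgroup.subset by blast
  fix a b assume "a \<in> conjset G g J" "b \<in> conjset G g J"
  then obtain x y where x: "x \<in> J" "a = g \<otimes> x \<otimes> inv g" and y: "y \<in> J" "b = g \<otimes> y \<otimes> inv g"
    by (auto simp: conjset_def)
  have xc: "x \<in> carrier G" "y \<in> carrier G" using x(1) y(1) Jc by auto
  have e: "a \<otimes> b = g \<otimes> (x \<otimes> y) \<otimes> inv g" using xc g x(2) y(2)
    by (simp add: m_assoc)
  have i: "x \<otimes> y \<in> J" by (rule subgroup.m_closed[OF J x(1) y(1)])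
  show "a \<otimes> b \<in> conjset G g J" unfolding conjset_def using i e by (rule rev_image_eqI)
qed

lemma conjset_comp:
  "J \<subseteq> carrier G \<Longrightarrow> g \<in> carrier G \<Longrightarrow> h \<in> carrier G \<Longrightarrow>
   conjset G g (conjset G h J) = conjset G (g \<otimes> h) J"
proof -
  assume J: "J \<subseteq> carrier G" and g: "g \<in> carrier G" and h: "h \<in> carrier G"
  have "\<And>x. x \<in> J \<Longrightarrow> g \<otimes> (h \<otimes> x \<otimes> inv h) \<otimes> inv g = g \<otimes> h \<otimes> x \<otimes> inv (g \<otimes> h)"
  proof -
    fix x assume "x \<in> J"
    then have xc: "x \<in> carrier G" using J by blast
    show "g \<otimes> (h \<otimes> x \<otimes> inv h) \<otimes> inv g = g \<otimes> h \<otimes> x \<otimes> inv (g \<otimes> h)"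
      using inv_mult_group[OF g h] xc g h by (simp add: m_assoc)
  qed
  then show ?thesis unfolding conjset_def image_image by (rule image_cong[OF refl])
qed

lemma conjset_one: "J \<subseteq> carrier G \<Longrightarrow> conjset G \<one> J = J"
  unfolding conjset_def by (auto simp: subsetD)

lemma conjset_self:
  assumes J: "subgroup J G" and h: "h \<in> J" shows "conjset G h J = J"
proof
  have Jc: "J \<subseteq> carrier G" using J subgroup.subset by blast
  have hc: "h \<in> carrier G" using h Jc by blast
  show "conjset G h J \<subseteq> J" using J h by (auto simp: conjset_def subgroup.m_closed subgroup.m_inv_closed)
  show "J \<subseteq> conjset G h J"
  proof
    fix x assume x: "x \<in> J"
    have xc: "x \<in> carrier G" using x Jc by blast
    have "inv h \<otimes> x \<otimes> h \<in> J" using J h x by (simp add: subgroup.m_closed subgroup.m_inv_closed)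
    moreover have "x = h \<otimes> (inv h \<otimes> x \<otimes> h) \<otimes> inv h" using xc hc
      by (simp add: m_assoc)
    ultimately show "x \<in> conjset G h J" unfolding conjset_def by (rule rev_image_eqI)
  qed
qed

lemma conjset_inv_eq:
  assumes "J \<subseteq> carrier G" "h \<in> carrier G" "conjset G h J = I"
  shows "J = conjset G (inv h) I"
proof -
  have "conjset G (inv h) (conjset G h J) = conjset G (inv h \<otimes> h) J"
    using assms(1,2) by (intro conjset_comp) auto
  also have "\<dots> = J" using assms(1,2) conjset_one[OF assms(1)] by simp
  finally show ?thesis using assms(3) by simp
qed

lemma isub_conj:
  assumes "isub G J L" "subgroup L G" "h \<in> L"
  shows "isub G (conjset G h J) L"
proof -
  have hc: "h \<in> carrier G" using subgroup.mem_carrier[OF assms(2,3)] .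
  have J: "subgroup J G" "J \<subseteq> L" using assms(1) by (auto simp: isub_def)
  have "conjset G h J \<subseteq> L"
  proof
    fix z assume "z \<in> conjset G h J"
    then obtain x where x: "x \<in> J" "z = h \<otimes> x \<otimes> inv h" by (auto simp: conjset_def)
    have "x \<in> L" using x(1) J(2) by blast
    then show "z \<in> L" unfolding x(2)
      by (intro subgroup.m_closed[OF assms(2)] subgroup.m_inv_closed[OF assms(2)] assms(3))
  qed
  then show ?thesis using conjset_subgroup[OF J(1) hc] by (simp add: isub_def)
qed

lemma dcos_elem:
  assumes J: "J \<subseteq> carrier G" and X: "X \<subseteq> carrier G" and h: "h \<in> carrier G" and g: "g \<in> carrier G"
  shows "conjset G h J <#> (g <# X) = h <# (J <#> ((inv h \<otimes> g) <# X))"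
proof -
  have "conjset G h J = {h} <#> J <#> {inv h}"
    unfolding conjset_def set_mult_def by auto
  then have "conjset G h J <#> (g <# X) = {h} <#> J <#> {inv h} <#> ({g} <#> X)"
    by (simp add: l_coset_eq_set_mult)
  also have "\<dots> = {h} <#> (J <#> (({inv h} <#> {g}) <#> X))"
    using J X h g by (simp add: set_mult_assoc set_mult_closed)
  also have "{inv h} <#> {g} = {inv h \<otimes> g}" by (simp add: set_mult_def)
  finally show ?thesis by (simp add: l_coset_eq_set_mult)
qed


lemma dcosets_conj:
  assumes L: "subgroup L G" and J: "J \<subseteq> carrier G" and X: "X \<subseteq> carrier G" and h: "h \<in> L"
  shows "dcosets G (conjset G h J) L X = (\<lambda>D. h <# D) ` dcosets G J L X"
proof -
  have hc: "h \<in> carrier G" using subgroup.mem_carrier[OF L h] .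
  show ?thesis
  proof
    show "dcosets G (conjset G h J) L X \<subseteq> (\<lambda>D. h <# D) ` dcosets G J L X"
    proof
      fix D assume "D \<in> dcosets G (conjset G h J) L X"
      then obtain g where g: "g \<in> L" "D = conjset G h J <#> (g <# X)" by (auto simp: dcosets_def)
      have gc: "g \<in> carrier G" using subgroup.mem_carrier[OF L g(1)] .
      have "inv h \<otimes> g \<in> L" using L g h by (simp add: subgroup.m_closed subgroup.m_inv_closed)
      moreover have "D = h <# (J <#> ((inv h \<otimes> g) <# X))" using dcos_elem[OF J X hc gc] g by simp
      ultimately show "D \<in> (\<lambda>D. h <# D) ` dcosets G J L X" by (auto simp: dcosets_def)
    qed
  next
    show "(\<lambda>D. h <# D) ` dcosets G J L X \<subseteq> dcosets G (conjset G h J) L X"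
    proof
      fix D assume "D \<in> (\<lambda>D. h <# D) ` dcosets G J L X"
      then obtain g where g: "g \<in> L" "D = h <# (J <#> (g <# X))" by (auto simp: dcosets_def)
      have gc: "g \<in> carrier G" using subgroup.mem_carrier[OF L g(1)] .
      have "h \<otimes> g \<in> L" using L g h by (simp add: subgroup.m_closed)
      moreover have "inv h \<otimes> (h \<otimes> g) = g" using hc gc by (simp add: m_assoc[symmetric])
      ultimately show "D \<in> dcosets G (conjset G h J) L X"
        using dcos_elem[OF J X hc, of "h \<otimes> g"] g hc gc unfolding dcosets_def by auto
    qed
  qed
qed

lemma dcosets_finite:
  assumes "finite (carrier G)" "subgroup L G" shows "finite (dcosets G J L X)"
proof -
  have "dcosets G J L X = (\<lambda>g. J <#> (g <# X)) ` L" by (auto simp: dcosets_def)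
  moreover have "finite L" using assms subgroup.subset finite_subset by blast
  ultimately show ?thesis by simp
qed

lemma card_dcosets_conj:
  assumes fin: "finite (carrier G)" and L: "subgroup L G" and J: "J \<subseteq> carrier G"
    and X: "X \<subseteq> carrier G" and h: "h \<in> L"
  shows "card (dcosets G (conjset G h J) L X) = card (dcosets G J L X)"
proof -
  have hc: "h \<in> carrier G" using subgroup.mem_carrier[OF L h] .
  have sub: "\<And>D. D \<in> dcosets G J L X \<Longrightarrow> D \<subseteq> carrier G"
  proof -
    fix D assume "D \<in> dcosets G J L X"
    then obtain g where g: "g \<in> L" "D = J <#> (g <# X)" by (auto simp: dcosets_def)
    have gc: "g \<in> carrier G" using subgroup.mem_carrier[OF L g(1)] .
    show "D \<subseteq> carrier G" using g gc J X by (simp add: set_mult_closed l_coset_subset_G)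
  qed
  have "inj_on (\<lambda>D. h <# D) (dcosets G J L X)"
  proof (rule inj_onI)
    fix D1 D2 assume d: "D1 \<in> dcosets G J L X" "D2 \<in> dcosets G J L X" "h <# D1 = h <# D2"
    then have "inv h <# (h <# D1) = inv h <# (h <# D2)" by simp
    then show "D1 = D2" using sub[OF d(1)] sub[OF d(2)] hc by (simp add: lcos_m_assoc lcos_mult_one)
  qed
  then show ?thesis using dcosets_conj[OF L J X h] by (simp add: card_image)
qed

lemma card_dcosets_le:
  assumes fin: "finite (carrier G)" and L: "subgroup L G" and J: "J \<subseteq> carrier G"
    and X: "X \<subseteq> carrier G"
  shows "card (dcosets G J L X) \<le> card (dcosets G J L {\<one>})"
proof -
  have "dcosets G J L X = (\<lambda>D. D <#> X) ` dcosets G J L {\<one>}"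
  proof -
    have "\<And>g. g \<in> L \<Longrightarrow> J <#> (g <# X) = (J <#> (g <# {\<one>})) <#> X"
    proof -
      fix g assume g: "g \<in> L"
      have gc: "g \<in> carrier G" using subgroup.mem_carrier[OF L g(1)] .
      have "g <# {\<one>} = {g}" using gc by (simp add: l_coset_def)
      then show "J <#> (g <# X) = (J <#> (g <# {\<one>})) <#> X"
        using gc J X by (simp add: set_mult_assoc l_coset_eq_set_mult)
    qed
    then show ?thesis unfolding dcosets_def by (auto simp: image_iff)
  qed
  then show ?thesis using dcosets_finite[OF fin L] card_image_le by metis
qed

lemma dcosets_mem_carrier:
  assumes L: "subgroup L G" and J: "subgroup J G" and X: "subgroup X G" and D: "D \<in> dcosets G J L X"
  shows "(SOME k. k \<in> D) \<in> carrier G"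
proof -
  obtain g where g: "g \<in> L" "D = J <#> (g <# X)" using D by (auto simp: dcosets_def)
  have gc: "g \<in> carrier G" using subgroup.mem_carrier[OF L g(1)] .
  have Jc: "J \<subseteq> carrier G" "X \<subseteq> carrier G" using J X subgroup.subset by blast+
  have "\<one> \<otimes> (g \<otimes> \<one>) \<in> D" unfolding g(2) set_mult_def l_coset_def
    using subgroup.one_closed[OF J] subgroup.one_closed[OF X] by blast
  then have "(SOME k. k \<in> D) \<in> D" by (rule someI)
  moreover have "D \<subseteq> carrier G" unfolding g(2) using Jc gc by (simp add: set_mult_closed l_coset_subset_G)
  ultimately show ?thesis by blast
qed

lemma nm_triv:
  assumes L: "subgroup L G" and J: "subgroup J G" and f1: "f {\<one>} = n"
  shows "nmG G L {\<one>} f J = (if isub G J L then n ^ card (dcosets G J L {\<one>}) else 0)"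
proof -
  have "\<And>D. D \<in> dcosets G J L {\<one>} \<Longrightarrow> (let g = (SOME g. g \<in> D) in f (upc G J g \<inter> {\<one>})) = n"
  proof -
    fix D assume D: "D \<in> dcosets G J L {\<one>}"
    define k where "k = (SOME g. g \<in> D)"
    have kc: "k \<in> carrier G" unfolding k_def using dcosets_mem_carrier[OF L J triv_subgroup D] .
    have "inv k \<otimes> \<one> \<otimes> inv (inv k) = \<one>" using kc by simp
    then have "\<one> \<in> upc G J k" unfolding upc_def conjset_def
      using subgroup.one_closed[OF J] by (metis rev_image_eqI)
    then have "upc G J k \<inter> {\<one>} = {\<one>}" by blast
    then show "(let g = (SOME g. g \<in> D) in f (upc G J g \<inter> {\<one>})) = n"
      using f1 unfolding k_def[symmetric] Let_def by simp
  qed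
  then show ?thesis unfolding nmG_def by simp
qed

end

lemma nm_scale:
  "nmG G K H (\<lambda>I. n * f I) J = n ^ card (dcosets G J K H) * nmG G K H f J"
  by (simp add: nmG_def Let_def prod.distrib)



lemma lemmaG:
  fixes G :: "('a, 'b) monoid_scheme" (structure) and P :: "'a set \<Rightarrow> ('a set \<Rightarrow> int) set"
  assumes grp: "group G" and fin: "finite (carrier G)" and pr: "prime_tideal G P"
    and P1: "P {\<one>\<^bsub>G\<^esub>} = {(\<lambda>I. 0)}"
    and K: "subgroup K G" and a: "a \<in> Atil G K" and n: "(n::int) \<noteq> 0"
    and na: "(\<lambda>I. n * a I) \<in> P K"
  shows "a \<in> P K"
proof -
  interpret group G by (rule grp)
  have ti: "tambara_ideal G P" using pr by (simp add: prime_tideal_def)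
  have tid: "\<And>H. subgroup H G \<Longrightarrow> tideal G H (P H)" using ti by (simp add: tambara_ideal_def)
  have resP: "\<And>H K b. subgroup H G \<Longrightarrow> subgroup K G \<Longrightarrow> H \<subseteq> K \<Longrightarrow> b \<in> P K \<Longrightarrow> resG G K H b \<in> P H"
    using ti unfolding tambara_ideal_def by blast
  have nmP: "\<And>H K b. subgroup H G \<Longrightarrow> subgroup K G \<Longrightarrow> H \<subseteq> K \<Longrightarrow> b \<in> P H \<Longrightarrow> nmG G K H b \<in> P K"
    using ti unfolding tambara_ideal_def by blast
  have cjP: "\<And>g H b. g \<in> carrier G \<Longrightarrow> subgroup H G \<Longrightarrow> b \<in> P H \<Longrightarrow> cjG G g H b \<in> P (conjset G g H)"
    using ti unfolding tambara_ideal_def by blast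
  have Pmul: "\<And>H x r. subgroup H G \<Longrightarrow> x \<in> P H \<Longrightarrow> r \<in> Atil G H \<Longrightarrow> (\<lambda>I. r I * x I) \<in> P H"
    using tid unfolding tideal_def by blast
  have prc: "\<And>K1 K2 a b. subgroup K1 G \<Longrightarrow> subgroup K2 G \<Longrightarrow> a \<in> Atil G K1 \<Longrightarrow> b \<in> Atil G K2 \<Longrightarrow>
       (\<forall>L H1 H2 g1 g2. subgroup L G \<longrightarrow> subgroup H1 G \<longrightarrow> subgroup H2 G \<longrightarrow>
          g1 \<in> carrier G \<longrightarrow> g2 \<in> carrier G \<longrightarrow> H1 \<subseteq> K1 \<longrightarrow> H2 \<subseteq> K2 \<longrightarrow>
          conjset G g1 H1 \<subseteq> L \<longrightarrow> conjset G g2 H2 \<subseteq> L \<longrightarrow>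
          (\<lambda>I. nmG G L (conjset G g1 H1) (cjG G g1 H1 (resG G K1 H1 a)) I *
               nmG G L (conjset G g2 H2) (cjG G g2 H2 (resG G K2 H2 b)) I) \<in> P L)
       \<Longrightarrow> a \<in> P K1 \<or> b \<in> P K2"
    using pr unfolding prime_tideal_def by blast
  define b where "b = (\<lambda>I::'a set. if I = {\<one>} then n else 0)"
  have isub1: "\<And>I. isub G I {\<one>} \<longleftrightarrow> I = {\<one>}"
    using triv_subgroup unfolding isub_def by (auto dest: subgroup.one_closed)
  have bA: "b \<in> Atil G {\<one>}"
    unfolding Atil_def using isub1 by (auto simp: b_def conjset_one)
  have bP: "b \<notin> P {\<one>}" using P1 n by (auto simp: b_def fun_eq_iff)
  have key: "\<forall>L H1 H2 g1 g2. subgroup L G \<longrightarrow> subgroup H1 G \<longrightarrow> subgroup H2 G \<longrightarrow>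
          g1 \<in> carrier G \<longrightarrow> g2 \<in> carrier G \<longrightarrow> H1 \<subseteq> K \<longrightarrow> H2 \<subseteq> {\<one>} \<longrightarrow>
          conjset G g1 H1 \<subseteq> L \<longrightarrow> conjset G g2 H2 \<subseteq> L \<longrightarrow>
          (\<lambda>I. nmG G L (conjset G g1 H1) (cjG G g1 H1 (resG G K H1 a)) I *
               nmG G L (conjset G g2 H2) (cjG G g2 H2 (resG G {\<one>} H2 b)) I) \<in> P L"
  proof (intro allI impI)
    fix L H1 H2 g1 g2
    assume L: "subgroup L G" and H1: "subgroup H1 G" and H2: "subgroup H2 G"
      and g1: "g1 \<in> carrier G" and g2: "g2 \<in> carrier G" and H1K: "H1 \<subseteq> K" and H21: "H2 \<subseteq> {\<one>}"
      and X1L: "conjset G g1 H1 \<subseteq> L" and X2L: "conjset G g2 H2 \<subseteq> L"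
    have H2e: "H2 = {\<one>}" using H21 subgroup.one_closed[OF H2] by blast
    have X2: "conjset G g2 H2 = {\<one>}" unfolding H2e conjset_def using g2 by simp
    define X1 where "X1 = conjset G g1 H1"
    have X1s: "subgroup X1 G" unfolding X1_def using conjset_subgroup[OF H1 g1] .
    have X1c: "X1 \<subseteq> carrier G" using X1s subgroup.subset by blast
    define f where "f = cjG G g1 H1 (resG G K H1 a)"
    define f2 where "f2 = cjG G g2 H2 (resG G {\<one>} H2 b)"
    have f2one: "f2 {\<one>} = n"
    proof -
      have "upc G {\<one>} g2 = {\<one>}" unfolding upc_def conjset_def using g2 by simp
      moreover have "conjset G g2 {\<one>} = {\<one>}" using X2 H2e by simp
      ultimately show ?thesis unfolding f2_def cjG_def resG_def H2e using isub1 triv_subgroup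
        by (simp add: b_def)
    qed
    have w: "nmG G L X1 (\<lambda>I. n * f I) \<in> P L"
    proof -
      have "(\<lambda>I. n * f I) = cjG G g1 H1 (resG G K H1 (\<lambda>I. n * a I))"
        unfolding f_def by (auto simp: cjG_def resG_def fun_eq_iff)
      moreover have "resG G K H1 (\<lambda>I. n * a I) \<in> P H1" using resP[OF H1 K H1K na] .
      ultimately have "(\<lambda>I. n * f I) \<in> P X1" unfolding X1_def using cjP[OF g1 H1] by simp
      then show ?thesis using nmP[OF X1s L] X1L unfolding X1_def by blast
    qed
    define n1 where "n1 J = card (dcosets G J L X1)" for J
    define n2 where "n2 J = card (dcosets G J L {\<one>})" for J
    define r where "r J = (if isub G J L then n ^ (n2 J - n1 J) else 0)" for J
    have rA: "r \<in> Atil G L"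
    proof -
      have "\<And>J h. isub G J L \<Longrightarrow> h \<in> L \<Longrightarrow> r (conjset G h J) = r J"
      proof -
        fix J h assume J: "isub G J L" and h: "h \<in> L"
        have Jc: "J \<subseteq> carrier G" using J subgroup.subset unfolding isub_def by blast
        have "isub G (conjset G h J) L" using isub_conj[OF J L h] .
        moreover have "n1 (conjset G h J) = n1 J" unfolding n1_def using card_dcosets_conj[OF fin L Jc X1c h] .
        moreover have "n2 (conjset G h J) = n2 J" unfolding n2_def using card_dcosets_conj[OF fin L Jc _ h] by simp
        ultimately show "r (conjset G h J) = r J" unfolding r_def using J by simp
      qed
      then show ?thesis unfolding Atil_def r_def by auto
    qed
    have eq: "(\<lambda>I. nmG G L X1 f I * nmG G L {\<one>} f2 I) = (\<lambda>I. r I * nmG G L X1 (\<lambda>I. n * f I) I)"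
    proof
      fix J
      show "nmG G L X1 f J * nmG G L {\<one>} f2 J = r J * nmG G L X1 (\<lambda>I. n * f I) J"
      proof (cases "isub G J L")
        case True
        have Js: "subgroup J G" using True unfolding isub_def by blast
        have Jc: "J \<subseteq> carrier G" using Js subgroup.subset by blast
        have le: "n1 J \<le> n2 J" unfolding n1_def n2_def using card_dcosets_le[OF fin L Jc X1c] .
        have "nmG G L {\<one>} f2 J = n ^ n2 J" using nm_triv[of L J f2 n, OF L Js f2one] True n2_def by simp
        moreover have "nmG G L X1 (\<lambda>I. n * f I) J = n ^ n1 J * nmG G L X1 f J"
          unfolding n1_def by (rule nm_scale)
        moreover have "n ^ n2 J = n ^ (n2 J - n1 J) * n ^ n1 J" using le
          by (metis le_add_diff_inverse2 power_add)
        ultimately show ?thesis unfolding r_def using True by simp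
      next
        case False
        then show ?thesis unfolding r_def nmG_def by simp
      qed
    qed
    have "(\<lambda>I. r I * nmG G L X1 (\<lambda>I. n * f I) I) \<in> P L" using Pmul[OF L w rA] .
    then show "(\<lambda>I. nmG G L (conjset G g1 H1) (cjG G g1 H1 (resG G K H1 a)) I *
               nmG G L (conjset G g2 H2) (cjG G g2 H2 (resG G {\<one>} H2 b)) I) \<in> P L"
      using eq unfolding X1_def f_def f2_def X2 by simp
  qed
  have "a \<in> P K \<or> b \<in> P {\<one>}" using prc[OF K triv_subgroup a bA key] .
  with bP show ?thesis by blast
qed



lemma tr_top_pos:
  fixes G :: "('a, 'b) monoid_scheme" (structure)
  assumes grp: "group G" and fin: "finite (carrier G)" and I: "subgroup I G"
  shows "trG G (carrier G) I (\<lambda>J. if J = I then 1 else 0) I \<noteq> 0"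
proof -
  interpret group G by (rule grp)
  define t where "t C = (let k = (SOME k. k \<in> C) in
      if upc G I k \<subseteq> I then (\<lambda>J. if J = I then (1::int) else 0) (upc G I k) else 0)" for C
  have Ic: "I \<subseteq> carrier G" using I subgroup.subset by blast
  have fl: "finite (lcosets G (carrier G) I)"
  proof -
    have "lcosets G (carrier G) I = (\<lambda>k. k <# I) ` carrier G" by (auto simp: lcosets_def)
    then show ?thesis using fin by simp
  qed
  have mem: "I \<in> lcosets G (carrier G) I"
    unfolding lcosets_def using lcos_mult_one[OF Ic] by force
  have tI: "t I = 1"
  proof -
    have "(SOME k. k \<in> I) \<in> I" using subgroup.one_closed[OF I] by (rule someI)
    then have "upc G I (SOME k. k \<in> I) = I" unfolding upc_def
      using conjset_self[OF I] subgroup.m_inv_closed[OF I] by simp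
    then show ?thesis unfolding t_def Let_def by simp
  qed
  have nn: "\<And>C. 0 \<le> t C" unfolding t_def Let_def by simp
  have "t I \<le> sum t (lcosets G (carrier G) I)" by (rule member_le_sum[OF mem _ fl]) (simp add: nn)
  then have "0 < sum t (lcosets G (carrier G) I)" using tI by simp
  moreover have "isub G I (carrier G)" using I Ic by (simp add: isub_def)
  ultimately show ?thesis unfolding trG_def t_def by simp
qed

lemma main_aux:
  fixes G :: "('a, 'b) monoid_scheme" (structure) and P :: "'a set \<Rightarrow> ('a set \<Rightarrow> int) set"
  assumes "group G" and "finite (carrier G)"
    and "prime_tideal G P"
    and "P {\<one>\<^bsub>G\<^esub>} = {(\<lambda>I. 0)}"
    and "\<exists>p :: 'a set \<Rightarrow> int. P (carrier G) =
           {a \<in> Atil G (carrier G). \<forall>I. isub G I (carrier G) \<longrightarrow> p I dvd a I}"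
  shows "{I. isub G I (carrier G) \<and> pI G P I \<noteq> 1} = {I. isub G I (carrier G) \<and> pI G P I = 0}
    \<and> (\<forall>H. subgroup H G \<longrightarrow>
          P H = Pideal G {I. isub G I (carrier G) \<and> pI G P I \<noteq> 1} 0 H)"
proof -
  interpret group G by (rule assms(1))
  note grp = assms(1) and fin = assms(2) and pr = assms(3) and P1 = assms(4)
  have ti: "tambara_ideal G P" using pr by (simp add: prime_tideal_def)
  have tid: "\<And>H. subgroup H G \<Longrightarrow> tideal G H (P H)" using ti by (simp add: tambara_ideal_def)
  have resP: "\<And>H K b. subgroup H G \<Longrightarrow> subgroup K G \<Longrightarrow> H \<subseteq> K \<Longrightarrow> b \<in> P K \<Longrightarrow> resG G K H b \<in> P H"
    using ti unfolding tambara_ideal_def by blast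
  have trP: "\<And>H K b. subgroup H G \<Longrightarrow> subgroup K G \<Longrightarrow> H \<subseteq> K \<Longrightarrow> b \<in> P H \<Longrightarrow> trG G K H b \<in> P K"
    using ti unfolding tambara_ideal_def by blast
  have Pmul: "\<And>H x r. subgroup H G \<Longrightarrow> x \<in> P H \<Longrightarrow> r \<in> Atil G H \<Longrightarrow> (\<lambda>I. r I * x I) \<in> P H"
    using tid unfolding tideal_def by blast
  have PA: "\<And>H x. subgroup H G \<Longrightarrow> x \<in> P H \<Longrightarrow> x \<in> Atil G H"
    using tid unfolding tideal_def by blast
  have P0: "\<And>H. subgroup H G \<Longrightarrow> (\<lambda>I. 0) \<in> P H"
    using tid unfolding tideal_def by blast
  have sG: "subgroup (carrier G) G" by (rule subgroup_self)
  have isubG: "\<And>I. isub G I (carrier G) \<longleftrightarrow> subgroup I G"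
    unfolding isub_def using subgroup.subset by blast
  define nz where "nz I \<longleftrightarrow> (\<exists>b\<in>P (carrier G). b I \<noteq> 0)" for I
  define ecl where "ecl I = (\<lambda>J. if isub G J (carrier G) \<and> (\<exists>g\<in>carrier G. J = conjset G g I) then (1::int) else 0)" for I
  have ecl_A: "\<And>I. subgroup I G \<Longrightarrow> ecl I \<in> Atil G (carrier G)"
  proof -
    fix I assume I: "subgroup I G"
    have Ic: "I \<subseteq> carrier G" using I subgroup.subset by blast
    have "\<And>J h. isub G J (carrier G) \<Longrightarrow> h \<in> carrier G \<Longrightarrow> ecl I (conjset G h J) = ecl I J"
    proof -
      fix J h assume J: "isub G J (carrier G)" and h: "h \<in> carrier G"
      have Jc: "J \<subseteq> carrier G" using J unfolding isub_def by blast
      have J': "isub G (conjset G h J) (carrier G)" using isub_conj[OF J sG h] .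
      have "(\<exists>g\<in>carrier G. conjset G h J = conjset G g I) \<longleftrightarrow> (\<exists>g\<in>carrier G. J = conjset G g I)"
      proof
        assume "\<exists>g\<in>carrier G. conjset G h J = conjset G g I"
        then obtain g where g: "g \<in> carrier G" "conjset G h J = conjset G g I" by blast
        have "J = conjset G (inv h) (conjset G g I)" using conjset_inv_eq[OF Jc h g(2)] .
        also have "\<dots> = conjset G (inv h \<otimes> g) I" using conjset_comp[OF Ic _ g(1)] h by simp
        finally show "\<exists>g\<in>carrier G. J = conjset G g I" using h g(1) by blast
      next
        assume "\<exists>g\<in>carrier G. J = conjset G g I"
        then obtain g where g: "g \<in> carrier G" "J = conjset G g I" by blast
        have "conjset G h J = conjset G (h \<otimes> g) I" unfolding g(2) using conjset_comp[OF Ic h g(1)] .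
        then show "\<exists>g\<in>carrier G. conjset G h J = conjset G g I" using h g(1) by blast
      qed
      then show "ecl I (conjset G h J) = ecl I J" unfolding ecl_def using J J' by simp
    qed
    then show "ecl I \<in> Atil G (carrier G)" unfolding Atil_def by (auto simp: ecl_def)
  qed
  have ecl_I: "\<And>I. subgroup I G \<Longrightarrow> ecl I I = 1"
  proof -
    fix I assume I: "subgroup I G"
    have "I = conjset G \<one> I" using conjset_one[of I] I subgroup.subset by metis
    then show "ecl I I = 1" unfolding ecl_def using I isubG by auto
  qed
  have ecl_P: "\<And>I. subgroup I G \<Longrightarrow> nz I \<Longrightarrow> ecl I \<in> P (carrier G)"
  proof -
    fix I assume I: "subgroup I G" and "nz I"
    then obtain b where b: "b \<in> P (carrier G)" "b I \<noteq> 0" unfolding nz_def by blast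
    have bA: "b \<in> Atil G (carrier G)" using PA[OF sG b(1)] .
    have "(\<lambda>J. ecl I J * b J) \<in> P (carrier G)" using Pmul[OF sG b(1) ecl_A[OF I]] .
    moreover have "(\<lambda>J. ecl I J * b J) = (\<lambda>J. b I * ecl I J)"
    proof
      fix J
      show "ecl I J * b J = b I * ecl I J"
      proof (cases "isub G J (carrier G) \<and> (\<exists>g\<in>carrier G. J = conjset G g I)")
        case True
        then obtain g where g: "g \<in> carrier G" "J = conjset G g I" by blast
        have "b (conjset G g I) = b I" using bA g(1) I isubG unfolding Atil_def by blast
        then have bJ: "b J = b I" using g(2) by simp
        have "ecl I J = 1" using True unfolding ecl_def by simp
        then show ?thesis using bJ by simp
      next
        case False
        then have "ecl I J = 0" unfolding ecl_def by meson
        then show ?thesis by simp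
      qed
    qed
    ultimately have "(\<lambda>J. b I * ecl I J) \<in> P (carrier G)" by simp
    then show "ecl I \<in> P (carrier G)" using lemmaG[OF grp fin pr P1 sG ecl_A[OF I] b(2)] by blast
  qed
  have pI_val: "\<And>I. subgroup I G \<Longrightarrow> pI G P I = (if nz I then 1 else 0)"
  proof -
    fix I assume I: "subgroup I G"
    show "pI G P I = (if nz I then 1 else 0)"
    proof (cases "nz I")
      case True
      have "(1::int) \<in> {a I | a. a \<in> P (carrier G)}" using ecl_P[OF I True] ecl_I[OF I] by force
      then have "Gcd {a I | a. a \<in> P (carrier G)} dvd 1" by (rule Gcd_dvd)
      then have "Gcd {a I | a. a \<in> P (carrier G)} = 1"
        using Gcd_int_greater_eq_0 by (simp add: zdvd1_eq)
      then show ?thesis using True unfolding pI_def by simp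
    next
      case False
      have "{a I | a. a \<in> P (carrier G)} = {0}" using False P0[OF sG] unfolding nz_def by auto
      then show ?thesis using False unfolding pI_def by simp
    qed
  qed
  have nz_of: "\<And>H a I. subgroup H G \<Longrightarrow> a \<in> P H \<Longrightarrow> isub G I H \<Longrightarrow> a I \<noteq> 0 \<Longrightarrow> nz I"
  proof -
    fix H a I assume H: "subgroup H G" and a: "a \<in> P H" and IH: "isub G I H" and aI: "a I \<noteq> 0"
    have I: "subgroup I G" "I \<subseteq> H" using IH unfolding isub_def by auto
    have Ic: "I \<subseteq> carrier G" using I subgroup.subset by blast
    define e where "e = (\<lambda>J. if J = I then (1::int) else 0)"
    have eA: "e \<in> Atil G I"
    proof -
      have "\<And>J h. isub G J I \<Longrightarrow> h \<in> I \<Longrightarrow> e (conjset G h J) = e J"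
      proof -
        fix J h assume J: "isub G J I" and h: "h \<in> I"
        have hc: "h \<in> carrier G" using subgroup.mem_carrier[OF I(1) h] .
        have Jc: "J \<subseteq> carrier G" using J subgroup.subset unfolding isub_def by blast
        have "conjset G h J = I \<longleftrightarrow> J = I"
        proof
          assume "conjset G h J = I"
          then have "J = conjset G (inv h) I" using conjset_inv_eq[OF Jc hc] by blast
          then show "J = I" using conjset_self[OF I(1)] subgroup.m_inv_closed[OF I(1) h] by simp
        next
          assume "J = I" then show "conjset G h J = I" using conjset_self[OF I(1) h] by simp
        qed
        then show "e (conjset G h J) = e J" unfolding e_def by simp
      qed
      moreover have "isub G I I" using I by (simp add: isub_def)
      ultimately show ?thesis unfolding Atil_def e_def by auto
    qed
    have rP: "resG G H I a \<in> P I" using resP[OF I(1) H I(2) a] .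
    have "(\<lambda>J. e J * resG G H I a J) \<in> P I" using Pmul[OF I(1) rP eA] .
    moreover have "(\<lambda>J. e J * resG G H I a J) = (\<lambda>J. a I * e J)"
      using I by (auto simp: e_def resG_def isub_def fun_eq_iff)
    ultimately have "(\<lambda>J. a I * e J) \<in> P I" by simp
    then have eP: "e \<in> P I" using lemmaG[OF grp fin pr P1 I(1) eA aI] by blast
    have "trG G (carrier G) I e \<in> P (carrier G)" using trP[OF I(1) sG Ic eP] .
    moreover have "trG G (carrier G) I e I \<noteq> 0" unfolding e_def using tr_top_pos[OF grp fin I(1)] .
    ultimately show "nz I" unfolding nz_def by blast
  qed
  obtain p where hp: "P (carrier G) = {a \<in> Atil G (carrier G). \<forall>I. isub G I (carrier G) \<longrightarrow> p I dvd a I}"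
    using assms(5) by blast
  define Z where "Z = (\<lambda>J. if isub G J (carrier G) \<and> nz J then (1::int) else 0)"
  have nz_conj: "\<And>J h. subgroup J G \<Longrightarrow> h \<in> carrier G \<Longrightarrow> nz (conjset G h J) \<longleftrightarrow> nz J"
  proof -
    fix J h assume J: "subgroup J G" and h: "h \<in> carrier G"
    have "\<And>b. b \<in> P (carrier G) \<Longrightarrow> b (conjset G h J) = b J"
      using PA[OF sG] J h isubG unfolding Atil_def by blast
    then show "nz (conjset G h J) \<longleftrightarrow> nz J" unfolding nz_def by (metis (no_types, lifting))
  qed
  have ZA: "Z \<in> Atil G (carrier G)"
  proof -
    have "\<And>J h. isub G J (carrier G) \<Longrightarrow> h \<in> carrier G \<Longrightarrow> Z (conjset G h J) = Z J"
      using isub_conj[OF _ sG] nz_conj isubG unfolding Z_def by simp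
    then show ?thesis unfolding Atil_def Z_def by auto
  qed
  have ZP: "Z \<in> P (carrier G)"
  proof -
    have "\<And>I. isub G I (carrier G) \<Longrightarrow> p I dvd Z I"
    proof -
      fix I assume I: "isub G I (carrier G)"
      show "p I dvd Z I"
      proof (cases "nz I")
        case True
        have Is: "subgroup I G" using I isubG by blast
        have "p I dvd ecl I I" using ecl_P[OF Is True] I hp by blast
        then show ?thesis using ecl_I[OF Is] True I unfolding Z_def by simp
      next
        case False
        then show ?thesis unfolding Z_def by simp
      qed
    qed
    then show ?thesis using ZA hp by blast
  qed
  define F where "F = {I. isub G I (carrier G) \<and> pI G P I \<noteq> 1}"
  have F_iff: "\<And>I. subgroup I G \<Longrightarrow> I \<in> F \<longleftrightarrow> \<not> nz I"
    unfolding F_def using pI_val isubG by simp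
  have part1: "{I. isub G I (carrier G) \<and> pI G P I \<noteq> 1} = {I. isub G I (carrier G) \<and> pI G P I = 0}"
    using pI_val isubG by auto
  have part2: "\<And>H. subgroup H G \<Longrightarrow> P H = Pideal G F 0 H"
  proof -
    fix H assume H: "subgroup H G"
    show "P H = Pideal G F 0 H"
    proof
      show "P H \<subseteq> Pideal G F 0 H"
      proof
        fix a assume a: "a \<in> P H"
        have "\<And>I. isub G I H \<Longrightarrow> (if I \<in> F then 0 else 1) dvd a I"
        proof -
          fix I assume IH: "isub G I H"
          have Is: "subgroup I G" using IH unfolding isub_def by blast
          show "(if I \<in> F then 0 else 1) dvd a I"
            using nz_of[OF H a IH] F_iff[OF Is] by auto
        qed
        then show "a \<in> Pideal G F 0 H" unfolding Pideal_def using PA[OF H a] by blast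
      qed
    next
      show "Pideal G F 0 H \<subseteq> P H"
      proof
        fix a assume a: "a \<in> Pideal G F 0 H"
        have aA: "a \<in> Atil G H" and ad: "\<And>I. isub G I H \<Longrightarrow> (if I \<in> F then 0 else 1) dvd a I"
          using a unfolding Pideal_def by auto
        have HG: "H \<subseteq> carrier G" using H subgroup.subset by blast
        have rZ: "resG G (carrier G) H Z \<in> P H" using resP[OF H sG HG ZP] .
        have "(\<lambda>J. a J * resG G (carrier G) H Z J) = a"
        proof
          fix J
          show "a J * resG G (carrier G) H Z J = a J"
          proof (cases "isub G J H")
            case True
            have Js: "subgroup J G" using True unfolding isub_def by blast
            show ?thesis
            proof (cases "nz J")
              case True
              then show ?thesis using \<open>isub G J H\<close> Js isubG unfolding resG_def Z_def by simp
            next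
              case False
              then have "J \<in> F" using F_iff[OF Js] by simp
              then have "a J = 0" using ad[OF \<open>isub G J H\<close>] by simp
              then show ?thesis by simp
            qed
          next
            case False
            then have "a J = 0" using aA unfolding Atil_def by blast
            then show ?thesis by simp
          qed
        qed
        then show "a \<in> P H" using Pmul[OF H rZ aA] by simp
      qed
    qed
  qed
  show ?thesis using part1 part2 unfolding F_def by blast
qed

theorem proposition4p12:
  fixes G :: "('a, 'b) monoid_scheme" and P :: "'a set \<Rightarrow> ('a set \<Rightarrow> int) set"
  assumes "group G" and "finite (carrier G)"
    and "prime_tideal G P"
    and "P {\<one>\<^bsub>G\<^esub>} = {(\<lambda>I. 0)}"
    and "\<exists>p :: 'a set \<Rightarrow> int. P (carrier G) =
           {a \<in> Atil G (carrier G). \<forall>I. isub G I (carrier G) \<longrightarrow> p I dvd a I}"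
  shows "{I. isub G I (carrier G) \<and> pI G P I \<noteq> 1} = {I. isub G I (carrier G) \<and> pI G P I = 0}
    \<and> (\<forall>H. subgroup H G \<longrightarrow>
          P H = Pideal G {I. isub G I (carrier G) \<and> pI G P I \<noteq> 1} 0 H)"
  using main_aux[OF assms] .

end
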